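(* For any $\mathcal{H}, \mathcal{G} \in \mathcal{P}$, the following relationships between the model inclusion order and the twin order exist: (i) if $\mathcal{H} \preceq_{s} \mathcal{G}$ then $\mathcal{H} \preceq_{t} \mathcal{G}$; (ii) if $\mathcal{H} \preceq_{s} \mathcal{G}$ and $\mathcal{H}$ is covered by $\mathcal{G}$ in the twin order (i.e., $\mathcal{H} \prec_{t} \mathcal{G}$ and there is no $\mathcal{F}\in\mathcal{P}$ with $\mathcal{H} \prec_{t} \mathcal{F} \prec_{t} \mathcal{G}$), then $\mathcal{H}$ is covered by $\mathcal{G}$ in the model inclusion order (i.e., $\mathcal{H} \prec_{s} \mathcal{G}$ and there is no $\mathcal{F}\in\mathcal{P}$ with $\mathcal{H} \prec_{s} \mathcal{F} \prec_{s} \mathcal{G}$).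
   Context: Let $V=\{1,\dots,p\}$ and let $\tau$ be a twin-pairing function on $V$, i.e. $\tau(i)\in V$ with $\tau(\tau(i))=i$ and $\tau(i)\neq i$; it is extended to edges by $\tau(i,j)=(\tau(i),\tau(j))$ (endpoints reordered so the smaller comes first) and to sets elementwise. Fix a partition $(L,R)$ of $V$ with $\tau(L)=R$, numbered so that $L=\{1,\dots,q\}$, $R=\{q+1,\dots,p\}$. Let $F_V=\{(i,j): i,j\in V, i<j\}$, $F_L=\{(i,j)\in F_V: i<\tau(j)\}$, $F_R=\{(i,j)\in F_V: i>\tau(j)\}$. A coloured graph $\mathcal G=(\mathcal V,\mathcal E)$ consists of a partition $\mathcal V$ of $V$ into vertex colour classes and a partition $\mathcal E$ of an edge set $E\subseteq F_V$ into edge colour classes. It is a coloured graph for paired data (pdCG) if every colour class is either atomic (a single element) or twin-pairing (of the form $\{i,\tau(i)\}$ or $\{(i,j),\tau(i,j)\}$ with $(i,j)\neq\tau(i,j)$). The associated RCON model for paired data $\mathcal{P}(\mathcal G)$ is the family of Gaussian distributions whose concentration matrix has zero entries for missing edges and equal entries for vertices (diagonal entries) or edges (off-diagonal entries) in the same colour class; $\mathcal{P}$ denotes the family of all pdCGs on $V$ (equivalently, of these models). Every pdCG is equivalently represented by the quadruplet $(V,E,\mathbb L,\mathbb E)$ where $E$ is the union of the edge colour classes, $E_L=E\cap F_L$, $E_R=E\cap F_R$, $\mathbb L=\{i\in L:\{i\}\in\mathcal V\}$ and $\mathbb E=\{(i,j)\in E_L\cap\tau(E_R): \{(i,j)\}\in\mathcal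 E\}$. The model inclusion order is $\mathcal H\preceq_s\mathcal G$ iff $\mathcal P(\mathcal H)\subseteq\mathcal P(\mathcal G)$, which holds iff the edge set of $\mathcal H$ is contained in that of $\mathcal G$, every vertex colour class of $\mathcal H$ is a union of vertex colour classes of $\mathcal G$, and every edge colour class of $\mathcal H$ is a union of edge colour classes of $\mathcal G$. The twin order is $\mathcal H\preceq_t\mathcal G$ iff $E_{\mathcal H}\subseteq E_{\mathcal G}$, $\mathbb L_{\mathcal H}\subseteq\mathbb L_{\mathcal G}$ and $\mathbb E_{\mathcal H}\subseteq\mathbb E_{\mathcal G}$. Strict versions are denoted $\prec_s$, $\prec_t$. *)

theory Defs
  imports Complex_Main
begin

type_synonym edge = "nat \<times> nat"
type_synonym cgraph = "nat set set \<times> edge set set"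
  (* (vertex colour classes, edge colour classes) *)

definition Vset :: "nat \<Rightarrow> nat set" where
  "Vset p = {1..p}"

definition twin_pairing :: "nat \<Rightarrow> (nat \<Rightarrow> nat) \<Rightarrow> bool" where
  "twin_pairing p \<tau> \<longleftrightarrow> (\<forall>i\<in>Vset p. \<tau> i \<in> Vset p \<and> \<tau> (\<tau> i) = i \<and> \<tau> i \<noteq> i)"

definition tau_e :: "(nat \<Rightarrow> nat) \<Rightarrow> edge \<Rightarrow> edge" where
  "tau_e \<tau> e = (min (\<tau> (fst e)) (\<tau> (snd e)), max (\<tau> (fst e)) (\<tau> (snd e)))"

definition F_V :: "nat \<Rightarrow> edge set" where
  "F_V p = {(i,j). i \<in> Vset p \<and> j \<in> Vset p \<and> i < j}"

definition F_L :: "nat \<Rightarrow> (nat \<Rightarrow> nat) \<Rightarrow> edge set" where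
  "F_L p \<tau> = {(i,j) \<in> F_V p. i < \<tau> j}"

definition F_R :: "nat \<Rightarrow> (nat \<Rightarrow> nat) \<Rightarrow> edge set" where
  "F_R p \<tau> = {(i,j) \<in> F_V p. i > \<tau> j}"

definition is_partition_of :: "'a set set \<Rightarrow> 'a set \<Rightarrow> bool" where
  "is_partition_of P A \<longleftrightarrow> \<Union>P = A \<and> {} \<notin> P \<and>
     (\<forall>C\<in>P. \<forall>D\<in>P. C \<noteq> D \<longrightarrow> C \<inter> D = {})"

definition edges :: "cgraph \<Rightarrow> edge set" where
  "edges G = \<Union>(snd G)"

definition pdCG :: "nat \<Rightarrow> (nat \<Rightarrow> nat) \<Rightarrow> cgraph \<Rightarrow> bool" where
  "pdCG p \<tau> G \<longleftrightarrow>
     is_partition_of (fst G) (Vset p) \<and>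
     edges G \<subseteq> F_V p \<and> is_partition_of (snd G) (edges G) \<and>
     (\<forall>C\<in>fst G. (\<exists>i. C = {i}) \<or> (\<exists>i. C = {i, \<tau> i})) \<and>
     (\<forall>C\<in>snd G. (\<exists>e. C = {e}) \<or> (\<exists>e. C = {e, tau_e \<tau> e} \<and> e \<noteq> tau_e \<tau> e))"

(* concentration matrices (indexed by V, zero outside V) of the RCON model *)
definition RCON :: "nat \<Rightarrow> cgraph \<Rightarrow> (nat \<Rightarrow> nat \<Rightarrow> real) set" where
  "RCON p G = {K.
     (\<forall>i j. K i j = K j i) \<and>
     (\<forall>i j. i \<notin> Vset p \<or> j \<notin> Vset p \<longrightarrow> K i j = 0) \<and>
     (\<forall>x. (\<exists>i\<in>Vset p. x i \<noteq> 0) \<longrightarrow>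
          (\<Sum>i\<in>Vset p. \<Sum>j\<in>Vset p. x i * K i j * x j) > 0) \<and>
     (\<forall>(i,j)\<in>F_V p. (i,j) \<notin> edges G \<longrightarrow> K i j = 0) \<and>
     (\<forall>C\<in>fst G. \<forall>i\<in>C. \<forall>j\<in>C. K i i = K j j) \<and>
     (\<forall>C\<in>snd G. \<forall>e\<in>C. \<forall>f\<in>C. K (fst e) (snd e) = K (fst f) (snd f))}"

definition model_le :: "nat \<Rightarrow> cgraph \<Rightarrow> cgraph \<Rightarrow> bool" where
  "model_le p H G \<longleftrightarrow> RCON p H \<subseteq> RCON p G"

definition model_less :: "nat \<Rightarrow> cgraph \<Rightarrow> cgraph \<Rightarrow> bool" where
  "model_less p H G \<longleftrightarrow> model_le p H G \<and> H \<noteq> G"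

definition LL :: "nat \<Rightarrow> cgraph \<Rightarrow> nat set" where
  "LL q G = {i \<in> {1..q}. {i} \<in> fst G}"

definition EE :: "nat \<Rightarrow> (nat \<Rightarrow> nat) \<Rightarrow> cgraph \<Rightarrow> edge set" where
  "EE p \<tau> G = {e \<in> (edges G \<inter> F_L p \<tau>) \<inter> tau_e \<tau> ` (edges G \<inter> F_R p \<tau>). {e} \<in> snd G}"

definition twin_le :: "nat \<Rightarrow> nat \<Rightarrow> (nat \<Rightarrow> nat) \<Rightarrow> cgraph \<Rightarrow> cgraph \<Rightarrow> bool" where
  "twin_le p q \<tau> H G \<longleftrightarrow> edges H \<subseteq> edges G \<and> LL q H \<subseteq> LL q G \<and> EE p \<tau> H \<subseteq> EE p \<tau> G"

definition twin_less :: "nat \<Rightarrow> nat \<Rightarrow> (nat \<Rightarrow> nat) \<Rightarrow> cgraph \<Rightarrow> cgraph \<Rightarrow> bool" where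
  "twin_less p q \<tau> H G \<longleftrightarrow> twin_le p q \<tau> H G \<and> H \<noteq> G"

end

theory Submission
  imports Defs
begin

definition Kmat :: "nat \<Rightarrow> (nat \<Rightarrow> real) \<Rightarrow> edge set \<Rightarrow> nat \<Rightarrow> nat \<Rightarrow> real" where
  "Kmat p d P = (\<lambda>k l. if k \<in> Vset p \<and> l \<in> Vset p then
      (if k = l then d k else 0) + (if (k,l) \<in> P then 1/8 else 0) else 0)"

lemma pd_lemma:
  fixes x :: "nat \<Rightarrow> real" and d :: "nat \<Rightarrow> real"
  assumes x: "\<exists>i\<in>Vset p. x i \<noteq> 0" and d: "\<forall>k\<in>Vset p. d k \<ge> 1"
    and P: "finite P" "card P \<le> 4"
  shows "(\<Sum>i\<in>Vset p. \<Sum>j\<in>Vset p. x i * Kmat p d P i j * x j) > 0"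
proof -
  let ?V = "Vset p"
  define S where "S = (\<Sum>i\<in>?V. x i ^ 2)"
  have fin: "finite ?V" by (simp add: Vset_def)
  have xle: "x i ^ 2 \<le> S" if "i \<in> ?V" for i
    unfolding S_def by (rule member_le_sum[OF that _ fin]) simp
  obtain i0 where i0: "i0 \<in> ?V" "x i0 \<noteq> 0" using x by blast
  have Spos: "S > 0" using xle[OF i0(1)] i0(2) by (smt (verit) zero_less_power2)
  have eq: "x i * Kmat p d P i j * x j = (if i = j then d i * x i ^ 2 else 0)
       + 1/8 * (if (i,j) \<in> P then x i * x j else 0)" if "i \<in> ?V" "j \<in> ?V" for i j
    using that by (auto simp: Kmat_def algebra_simps power2_eq_square)
  have A: "(\<Sum>i\<in>?V. \<Sum>j\<in>?V. x i * Kmat p d P i j * x j)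
      = (\<Sum>i\<in>?V. \<Sum>j\<in>?V. (if i = j then d i * x i ^ 2 else 0))
       + 1/8 * (\<Sum>i\<in>?V. \<Sum>j\<in>?V. (if (i,j) \<in> P then x i * x j else 0))"
    by (simp add: eq sum.distrib sum_distrib_left cong: sum.cong)
  have B1: "(\<Sum>i\<in>?V. \<Sum>j\<in>?V. (if i = j then d i * x i ^ 2 else 0)) = (\<Sum>i\<in>?V. d i * x i ^ 2)"
    using fin by simp
  have B2: "(\<Sum>i\<in>?V. d i * x i ^ 2) \<ge> S" unfolding S_def
    by (rule sum_mono) (use d in \<open>auto intro!: mult_right_mono[of 1 _ "x _ ^ 2", simplified]\<close>)
  have off1: "(if (i,j) \<in> P then x i * x j else 0) \<ge> - (if (i,j) \<in> P then S else 0)"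
    if "i \<in> ?V" "j \<in> ?V" for i j
  proof -
    have "x i * x j \<ge> - (x i ^ 2 + x j ^ 2) / 2"
      using sum_squares_ge_zero[of "x i + x j" 0] by (simp add: power2_eq_square algebra_simps)
    then show ?thesis using xle[OF that(1)] xle[OF that(2)] by auto
  qed
  have C1: "(\<Sum>i\<in>?V. \<Sum>j\<in>?V. (if (i,j) \<in> P then x i * x j else 0))
      \<ge> (\<Sum>i\<in>?V. \<Sum>j\<in>?V. - (if (i,j) \<in> P then S else 0))"
    by (intro sum_mono off1)
  have C2: "(\<Sum>i\<in>?V. \<Sum>j\<in>?V. - (if (i,j) \<in> P then S else 0))
      = - (\<Sum>ij\<in>?V \<times> ?V. (if ij \<in> P then S else 0))"
    by (simp add: sum.cartesian_product sum_negf)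
  have C3: "(\<Sum>ij\<in>?V \<times> ?V. (if ij \<in> P then S else 0)) = S * card (?V \<times> ?V \<inter> P)"
    using fin by (simp add: sum.If_cases)
  have C4: "card (?V \<times> ?V \<inter> P) \<le> 4"
    using card_mono[OF P(1), of "?V \<times> ?V \<inter> P"] P(2) by auto
  have "S * card (?V \<times> ?V \<inter> P) \<le> S * 4"
    using C4 Spos by (intro mult_left_mono) auto
  then show ?thesis using A B1 B2 C1 C2 C3 Spos by linarith
qed


lemma Kmat_edge_val:
  assumes "g \<in> F_V p" "C \<subseteq> F_V p"
  shows "Kmat p d (C \<union> converse C) (fst g) (snd g) = (if g \<in> C then 1/8 else 0)"
  using assms by (cases g) (auto simp: Kmat_def F_V_def)

lemma pd_edges: "pdCG p \<tau> H \<Longrightarrow> edges H \<subseteq> F_V p"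
  by (simp add: pdCG_def)

lemma class_sub: "pdCG p \<tau> H \<Longrightarrow> C \<in> snd H \<Longrightarrow> C \<subseteq> F_V p"
  using pd_edges[of p \<tau> H] unfolding edges_def by blast

lemma classes_disj: "pdCG p \<tau> H \<Longrightarrow> C \<in> snd H \<Longrightarrow> D \<in> snd H \<Longrightarrow> C \<noteq> D \<Longrightarrow> C \<inter> D = {}"
proof -
  assume "pdCG p \<tau> H" "C \<in> snd H" "D \<in> snd H" "C \<noteq> D"
  moreover have "is_partition_of (snd H) (edges H)" using \<open>pdCG p \<tau> H\<close> by (simp add: pdCG_def)
  ultimately show ?thesis unfolding is_partition_of_def by blast
qed

lemma vclasses_disj: "pdCG p \<tau> H \<Longrightarrow> C \<in> fst H \<Longrightarrow> D \<in> fst H \<Longrightarrow> C \<noteq> D \<Longrightarrow> C \<inter> D = {}"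
proof -
  assume "pdCG p \<tau> H" "C \<in> fst H" "D \<in> fst H" "C \<noteq> D"
  moreover have "is_partition_of (fst H) (Vset p)" using \<open>pdCG p \<tau> H\<close> by (simp add: pdCG_def)
  ultimately show ?thesis unfolding is_partition_of_def by blast
qed

lemma vclass_sub: "pdCG p \<tau> H \<Longrightarrow> C \<in> fst H \<Longrightarrow> C \<subseteq> Vset p"
proof -
  assume "pdCG p \<tau> H" "C \<in> fst H"
  moreover have "is_partition_of (fst H) (Vset p)" using \<open>pdCG p \<tau> H\<close> by (simp add: pdCG_def)
  ultimately show ?thesis unfolding is_partition_of_def by blast
qed

lemma vclass_form: assumes "pdCG p \<tau> H" "C \<in> fst H"
  shows "(\<exists>i. C = {i}) \<or> (\<exists>i. C = {i, \<tau> i})"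
proof -
  have "\<forall>C\<in>fst H. (\<exists>i. C = {i}) \<or> (\<exists>i. C = {i, \<tau> i})" using assms(1) by (simp add: pdCG_def)
  then show ?thesis using assms(2) by blast
qed

lemma eclass_form: assumes "pdCG p \<tau> H" "C \<in> snd H"
  shows "(\<exists>e. C = {e}) \<or> (\<exists>e. C = {e, tau_e \<tau> e} \<and> e \<noteq> tau_e \<tau> e)"
proof -
  have "\<forall>C\<in>snd H. (\<exists>e. C = {e}) \<or> (\<exists>e. C = {e, tau_e \<tau> e} \<and> e \<noteq> tau_e \<tau> e)"
    using assms(1) by (simp add: pdCG_def)
  then show ?thesis using assms(2) by blast
qed

lemma vcover: assumes "pdCG p \<tau> H" "i \<in> Vset p" shows "\<exists>C\<in>fst H. i \<in> C"
proof -
  have "\<Union>(fst H) = Vset p" using assms(1) by (simp add: pdCG_def is_partition_of_def)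
  then show ?thesis using assms(2) by blast
qed

lemma Kmat_sym: "sym P \<Longrightarrow> Kmat p d P i j = Kmat p d P j i"
  unfolding Kmat_def sym_def by auto

lemma Kmat_edge_RCON:
  assumes H: "pdCG p \<tau> H" and C: "C \<in> snd H"
  shows "Kmat p (\<lambda>_. 1) (C \<union> converse C) \<in> RCON p H"
proof -
  let ?K = "Kmat p (\<lambda>_. 1) (C \<union> converse C)"
  have CF: "C \<subseteq> F_V p" using class_sub[OF H C] .
  have CE: "C \<subseteq> edges H" using C unfolding edges_def by blast
  have cardC: "card C \<le> 2"
    using eclass_form[OF H C] by (auto simp: card_insert_if)
  have finC: "finite C"
    using eclass_form[OF H C] by auto
  have card: "card (C \<union> converse C) \<le> 4"
    using card_Un_le[of C "converse C"] cardC by simp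
  have fin: "finite (C \<union> converse C)" using finC by simp
  have "sym (C \<union> converse C)" by (auto simp: sym_def)
  note symK = Kmat_sym[OF this]
  have pd: "(\<Sum>i\<in>Vset p. \<Sum>j\<in>Vset p. x i * ?K i j * x j) > 0" if "\<exists>i\<in>Vset p. x i \<noteq> 0" for x
    by (rule pd_lemma[OF that _ fin card]) simp
  have nonedge: "?K i j = 0" if "(i,j) \<in> F_V p" "(i,j) \<notin> edges H" for i j
    using Kmat_edge_val[OF that(1) CF, of "\<lambda>_. 1"] that CE by auto
  have vcl: "?K i i = ?K j j" if "D \<in> fst H" "i \<in> D" "j \<in> D" for D i j
    using vclass_sub[OF H that(1)] that CF by (auto simp: Kmat_def F_V_def)
  have ecl: "?K (fst e) (snd e) = ?K (fst f) (snd f)" if "D \<in> snd H" "e \<in> D" "f \<in> D" for D e f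
  proof -
    have DF: "D \<subseteq> F_V p" using class_sub[OF H that(1)] .
    have ve: "?K (fst e) (snd e) = (if e \<in> C then 1/8 else 0)"
      using Kmat_edge_val[OF _ CF] DF that by blast
    have vf: "?K (fst f) (snd f) = (if f \<in> C then 1/8 else 0)"
      using Kmat_edge_val[OF _ CF] DF that by blast
    show ?thesis
    proof (cases "D = C")
      case True then show ?thesis using ve vf that by simp
    next
      case False
      then have "D \<inter> C = {}" using classes_disj[OF H that(1) C] by blast
      then show ?thesis using ve vf that by auto
    qed
  qed
  have out: "?K a b = 0" if "a \<notin> Vset p \<or> b \<notin> Vset p" for a b
    using that by (auto simp: Kmat_def)
  show ?thesis unfolding RCON_def mem_Collect_eq
    apply (intro conjI)
         apply (intro allI, rule symK)
        apply (intro allI impI, erule out)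
       apply (intro allI impI, erule pd)
      apply clarify apply (erule (1) nonedge)
     apply (intro ballI, rule vcl; assumption)
    apply (intro ballI, rule ecl; assumption)
    done
qed

lemma Kmat_vert_RCON:
  assumes H: "pdCG p \<tau> H" and i: "{i} \<in> fst H"
  shows "Kmat p (\<lambda>k. if k = i then 2 else 1) {} \<in> RCON p H"
proof -
  let ?K = "Kmat p (\<lambda>k. if k = i then 2 else 1) {}"
  have "sym ({} :: edge set)" by (auto simp: sym_def)
  note symK = Kmat_sym[OF this]
  have pd: "(\<Sum>i\<in>Vset p. \<Sum>j\<in>Vset p. x i * ?K i j * x j) > 0" if "\<exists>i\<in>Vset p. x i \<noteq> 0" for x
    by (rule pd_lemma[OF that]) auto
  have off: "?K a b = 0" if "(a,b) \<in> F_V p" for a b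
    using that by (auto simp: Kmat_def F_V_def)
  have vcl: "?K a a = ?K b b" if "D \<in> fst H" "a \<in> D" "b \<in> D" for D a b
  proof (cases "D = {i}")
    case True then show ?thesis using that by simp
  next
    case False
    then have "D \<inter> {i} = {}" using vclasses_disj[OF H that(1) i] by blast
    then show ?thesis using that vclass_sub[OF H that(1)] by (auto simp: Kmat_def)
  qed
  have ecl: "?K (fst e) (snd e) = ?K (fst f) (snd f)" if "D \<in> snd H" "e \<in> D" "f \<in> D" for D e f
  proof -
    have "e \<in> F_V p" "f \<in> F_V p" using class_sub[OF H that(1)] that by blast+
    then have "?K (fst e) (snd e) = 0" "?K (fst f) (snd f) = 0" using off by auto
    then show ?thesis by simp
  qed
  have out: "?K a b = 0" if "a \<notin> Vset p \<or> b \<notin> Vset p" for a b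
    using that by (auto simp: Kmat_def)
  show ?thesis unfolding RCON_def mem_Collect_eq
    apply (intro conjI)
         apply (intro allI, rule symK)
        apply (intro allI impI, erule out)
       apply (intro allI impI, erule pd)
      apply clarify apply (erule off)
     apply (intro ballI, rule vcl; assumption)
    apply (intro ballI, rule ecl; assumption)
    done
qed

lemma RCON_vcl: "K \<in> RCON p G \<Longrightarrow> C \<in> fst G \<Longrightarrow> i \<in> C \<Longrightarrow> j \<in> C \<Longrightarrow> K i i = K j j"
  unfolding RCON_def mem_Collect_eq by (elim conjE) blast

lemma RCON_ecl: "K \<in> RCON p G \<Longrightarrow> C \<in> snd G \<Longrightarrow> e \<in> C \<Longrightarrow> f \<in> C
    \<Longrightarrow> K (fst e) (snd e) = K (fst f) (snd f)"
  unfolding RCON_def mem_Collect_eq by (elim conjE) blast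

lemma RCON_nonedge: "K \<in> RCON p G \<Longrightarrow> e \<in> F_V p \<Longrightarrow> e \<notin> edges G \<Longrightarrow> K (fst e) (snd e) = 0"
proof -
  assume a: "K \<in> RCON p G" "e \<in> F_V p" "e \<notin> edges G"
  have "\<forall>(i,j)\<in>F_V p. (i,j) \<notin> edges G \<longrightarrow> K i j = 0"
    using a(1) unfolding RCON_def mem_Collect_eq by (elim conjE)
  then show ?thesis using a(2,3) by (cases e) auto
qed

lemma part1:
  assumes tp: "twin_pairing p \<tau>" and H: "pdCG p \<tau> H" and G: "pdCG p \<tau> G"
    and le: "model_le p H G"
  shows "twin_le p q \<tau> H G"
proof -
  have sub: "RCON p H \<subseteq> RCON p G" using le by (simp add: model_le_def)
  have E: "edges H \<subseteq> edges G"
  proof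
    fix e assume e: "e \<in> edges H"
    then obtain C where C: "C \<in> snd H" "e \<in> C" unfolding edges_def by blast
    have "Kmat p (\<lambda>_. 1) (C \<union> converse C) \<in> RCON p G"
      using Kmat_edge_RCON[OF H C(1)] sub by blast
    moreover have eF: "e \<in> F_V p" using e pd_edges[OF H] by blast
    moreover have "Kmat p (\<lambda>_. 1) (C \<union> converse C) (fst e) (snd e) = 1/8"
      using Kmat_edge_val[OF eF class_sub[OF H C(1)]] C by simp
    ultimately show "e \<in> edges G"
      using RCON_nonedge by fastforce
  qed
  have L: "LL q H \<subseteq> LL q G"
  proof
    fix i assume "i \<in> LL q H"
    then have i: "i \<in> {1..q}" "{i} \<in> fst H" by (auto simp: LL_def)
    have iV: "i \<in> Vset p" using vclass_sub[OF H i(2)] by blast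
    let ?K = "Kmat p (\<lambda>k. if k = i then 2 else 1) {}"
    have KG: "?K \<in> RCON p G" using Kmat_vert_RCON[OF H i(2)] sub by blast
    have "{i} \<in> fst G"
    proof (rule ccontr)
      assume nI: "{i} \<notin> fst G"
      obtain D where D: "D \<in> fst G" "i \<in> D" using vcover[OF G iV] by blast
      then obtain j where j: "D = {j, \<tau> j}" using nI vclass_form[OF G D(1)] by blast
      have DV: "D \<subseteq> Vset p" using vclass_sub[OF G D(1)] .
      have "j \<in> Vset p" using DV j by blast
      moreover have "\<forall>i\<in>Vset p. \<tau> i \<in> Vset p \<and> \<tau> (\<tau> i) = i \<and> \<tau> i \<noteq> i"
        using tp by (simp add: twin_pairing_def)
      ultimately have tj: "\<tau> j \<noteq> j" by blast
      obtain k where k: "k \<in> D" "k \<noteq> i"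
      proof (cases "i = j")
        case True then show ?thesis using that[of "\<tau> j"] tj j by simp
      next
        case False then show ?thesis using that[of j] j by simp
      qed
      have "?K i i = ?K k k" using RCON_vcl[OF KG D(1) D(2) k(1)] .
      moreover have "k \<in> Vset p" using DV k by blast
      ultimately show False using iV k by (simp add: Kmat_def)
    qed
    then show "i \<in> LL q G" using i by (simp add: LL_def)
  qed
  have EEs: "EE p \<tau> H \<subseteq> EE p \<tau> G"
  proof
    fix e assume eH: "e \<in> EE p \<tau> H"
    then have e: "e \<in> edges H \<inter> F_L p \<tau>" "e \<in> tau_e \<tau> ` (edges H \<inter> F_R p \<tau>)" "{e} \<in> snd H"
      by (auto simp: EE_def)
    have eG: "e \<in> edges G" using E e by blast
    have rest: "e \<in> tau_e \<tau> ` (edges G \<inter> F_R p \<tau>)" using e(2) E by blast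
    let ?K = "Kmat p (\<lambda>_. 1) ({e} \<union> converse {e})"
    have KG: "?K \<in> RCON p G" using Kmat_edge_RCON[OF H e(3)] sub by blast
    have eF: "{e} \<subseteq> F_V p" using class_sub[OF H e(3)] .
    have "{e} \<in> snd G"
    proof (rule ccontr)
      assume nI: "{e} \<notin> snd G"
      obtain D where D: "D \<in> snd G" "e \<in> D" using eG unfolding edges_def by blast
      then obtain g where g: "D = {g, tau_e \<tau> g}" "g \<noteq> tau_e \<tau> g" using nI eclass_form[OF G D(1)] by blast
      have DF: "D \<subseteq> F_V p" using class_sub[OF G D(1)] .
      obtain k where k: "k \<in> D" "k \<noteq> e"
      proof (cases "e = g")
        case True then show ?thesis using that[of "tau_e \<tau> g"] g by simp
      next
        case False then show ?thesis using that[of g] g by simp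
      qed
      have "?K (fst e) (snd e) = ?K (fst k) (snd k)" using RCON_ecl[OF KG D(1) D(2) k(1)] .
      moreover have "?K (fst e) (snd e) = 1/8" using Kmat_edge_val[OF _ eF] DF D by auto
      moreover have "?K (fst k) (snd k) = 0" using Kmat_edge_val[OF _ eF] DF k by auto
      ultimately show False by simp
    qed
    then show "e \<in> EE p \<tau> G" using eG e(1) rest by (auto simp: EE_def)
  qed
  show ?thesis using E L EEs by (simp add: twin_le_def)
qed

theorem proposition7:
  fixes p q :: nat and \<tau> :: "nat \<Rightarrow> nat" and H G :: cgraph
  assumes "twin_pairing p \<tau>"
    and "q \<le> p"
    and "\<tau> ` {1..q} = {q+1..p}"
    and "pdCG p \<tau> H" and "pdCG p \<tau> G"
  shows "(model_le p H G \<longrightarrow> twin_le p q \<tau> H G) \<and>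
         (model_le p H G \<and> twin_less p q \<tau> H G \<and>
            \<not> (\<exists>F. pdCG p \<tau> F \<and> twin_less p q \<tau> H F \<and> twin_less p q \<tau> F G)
          \<longrightarrow> model_less p H G \<and>
            \<not> (\<exists>F. pdCG p \<tau> F \<and> model_less p H F \<and> model_less p F G))"
proof (intro conjI impI)
  show "model_le p H G \<Longrightarrow> twin_le p q \<tau> H G" using part1 assms by blast
next
  assume a: "model_le p H G \<and> twin_less p q \<tau> H G \<and>
            \<not> (\<exists>F. pdCG p \<tau> F \<and> twin_less p q \<tau> H F \<and> twin_less p q \<tau> F G)"
  then show "model_less p H G" by (simp add: model_less_def twin_less_def)
  show "\<not> (\<exists>F. pdCG p \<tau> F \<and> model_less p H F \<and> model_less p F G)"
  proof
    assume "\<exists>F. pdCG p \<tau> F \<and> model_less p H F \<and> model_less p F G"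
    then obtain F where F: "pdCG p \<tau> F" "model_less p H F" "model_less p F G" by blast
    have "twin_le p q \<tau> H F" using part1[OF assms(1,4) F(1)] F(2) by (simp add: model_less_def)
    moreover have "twin_le p q \<tau> F G" using part1[OF assms(1) F(1) assms(5)] F(3) by (simp add: model_less_def)
    ultimately have "pdCG p \<tau> F \<and> twin_less p q \<tau> H F \<and> twin_less p q \<tau> F G"
      using F by (simp add: twin_less_def model_less_def)
    then show False using a by blast
  qed
qed

end
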